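(* Let $n \geq 3$ and let $k$ be an integer with $0 < k < \frac{n}{2}$. Write points of $\mathbb{R}^n$ as $(x,y)$ with $x \in \mathbb{R}^{n-k}$ and $y \in \mathbb{R}^k$. Let $u$ be a convex function on $\{|x| < 1\} \cap \{|y| < 1\}$ satisfying $\det D^2 u \geq 1$ there, with $u \geq 0$ and $u = 0$ on $\{x = 0\}$. Then there is a constant $c(n) > 0$ such that for all $r < 1$, $$\inf_{|y|<1} \sup_{|x| = r} u(x,y) > c(n)\, r^{2 - \frac{2k}{n}}.$$
   Context: The inequality $\det D^2 u \geq 1$ for a convex function is understood in the weak (Alexandrov/viscosity) sense. *)

theory Defs
  imports "HOL-Analysis.Analysis"
begin

text \<open>Points of R^n are vectors p :: real^'n.  A set K of coordinate indices with
  card K = k selects the y-block; the remaining n-k coordinates form the x-block.\<close>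

definition xnorm :: "'n::finite set \<Rightarrow> real^'n \<Rightarrow> real" where
  "xnorm K p = sqrt (\<Sum>i\<in>UNIV - K. (p $ i)^2)"

definition ynorm :: "'n::finite set \<Rightarrow> real^'n \<Rightarrow> real" where
  "ynorm K p = sqrt (\<Sum>i\<in>K. (p $ i)^2)"

definition cyl :: "'n::finite set \<Rightarrow> (real^'n) set" where
  "cyl K = {p. xnorm K p < 1 \<and> ynorm K p < 1}"

definition subdiff_image :: "(real^'n::finite) set \<Rightarrow> (real^'n \<Rightarrow> real) \<Rightarrow> (real^'n) set \<Rightarrow> (real^'n) set" where
  "subdiff_image \<Omega> u E = {v. \<exists>p\<in>E. \<forall>q\<in>\<Omega>. u q \<ge> u p + v \<bullet> (q - p)}"

text \<open>det D^2 u \<ge> 1 in the Alexandrov sense: the Monge-Ampere measure of every Borel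
  subset E of \<Omega> dominates its Lebesgue measure.\<close>
definition MA_ge_one :: "(real^'n::finite) set \<Rightarrow> (real^'n \<Rightarrow> real) \<Rightarrow> bool" where
  "MA_ge_one \<Omega> u \<longleftrightarrow> (\<forall>E \<in> sets borel. E \<subseteq> \<Omega> \<longrightarrow>
      subdiff_image \<Omega> u E \<in> sets lebesgue \<and>
      emeasure lebesgue (subdiff_image \<Omega> u E) \<ge> emeasure lebesgue E)"

end

theory Submission
  imports Defs
begin


definition PX :: "'n::finite set \<Rightarrow> real^'n \<Rightarrow> real^'n" where
  "PX K p = (\<chi> i. if i \<in> K then 0 else p $ i)"
definition PY :: "'n::finite set \<Rightarrow> real^'n \<Rightarrow> real^'n" where
  "PY K p = (\<chi> i. if i \<in> K then p $ i else 0)"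

lemma xnorm_PX: "xnorm K p = norm (PX K p)"
proof -
  have "(\<Sum>i\<in>UNIV. (norm (PX K p $ i))^2) = (\<Sum>i\<in>UNIV. if i \<in> K then 0 else (p$i)^2)"
    by (rule sum.cong) (auto simp: PX_def)
  also have "\<dots> = (\<Sum>i\<in>UNIV - K. (p $ i)^2)"
    by (simp add: sum.If_cases Diff_eq)
  finally show ?thesis by (simp add: xnorm_def norm_vec_def L2_set_def)
qed

lemma ynorm_PY: "ynorm K p = norm (PY K p)"
proof -
  have "(\<Sum>i\<in>UNIV. (norm (PY K p $ i))^2) = (\<Sum>i\<in>UNIV. if i \<in> K then (p$i)^2 else 0)"
    by (rule sum.cong) (auto simp: PY_def)
  also have "\<dots> = (\<Sum>i\<in>K. (p $ i)^2)"
    by (simp add: sum.If_cases Diff_eq)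
  finally show ?thesis by (simp add: ynorm_def norm_vec_def L2_set_def)
qed

lemma linear_PX: "linear (PX K)"
  by (rule linearI) (auto simp: PX_def vec_eq_iff)
lemma linear_PY: "linear (PY K)"
  by (rule linearI) (auto simp: PY_def vec_eq_iff)

lemma cont_PX: "continuous_on S (PX K)"
  by (intro linear_continuous_on linear_conv_bounded_linear[THEN iffD1] linear_PX)
lemma cont_PY: "continuous_on S (PY K)"
  by (intro linear_continuous_on linear_conv_bounded_linear[THEN iffD1] linear_PY)

lemma cont_xnorm: "continuous_on S (xnorm K)"
  unfolding xnorm_PX[abs_def] by (intro continuous_on_norm cont_PX)
lemma cont_ynorm: "continuous_on S (ynorm K)"
  unfolding ynorm_PY[abs_def] by (intro continuous_on_norm cont_PY)

lemma open_cyl: "open (cyl K)"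
proof -
  have "cyl K = {p. xnorm K p < 1} \<inter> {p. ynorm K p < 1}" by (auto simp: cyl_def)
  then show ?thesis
    by (simp add: open_Int open_Collect_less cont_xnorm cont_ynorm)
qed

lemma convex_cyl: fixes K :: "'n::finite set" shows "convex (cyl K)"
proof (rule convexI)
  fix x y :: "real^'n" and s t :: real
  assume x: "x \<in> cyl K" and y: "y \<in> cyl K" and st0: "0 \<le> s" "0 \<le> t" "s + t = 1"
  then have st: "0 \<le> s \<and> 0 \<le> t \<and> s + t = 1" by simp
  have "PX K (s *\<^sub>R x + t *\<^sub>R y) = s *\<^sub>R PX K x + t *\<^sub>R PX K y"
    by (simp add: PX_def vec_eq_iff)
  then have "norm (PX K (s *\<^sub>R x + t *\<^sub>R y)) \<le> norm (s *\<^sub>R PX K x) + norm (t *\<^sub>R PX K y)"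
    by (metis norm_triangle_ineq)
  also have "\<dots> = s * norm (PX K x) + t * norm (PX K y)" using st by simp
  also have "\<dots> < 1" using x y st by (intro convex_bound_lt) (auto simp: cyl_def xnorm_PX)
  finally have 1: "xnorm K (s *\<^sub>R x + t *\<^sub>R y) < 1" by (simp add: xnorm_PX)
  have "PY K (s *\<^sub>R x + t *\<^sub>R y) = s *\<^sub>R PY K x + t *\<^sub>R PY K y"
    by (simp add: PY_def vec_eq_iff)
  then have "norm (PY K (s *\<^sub>R x + t *\<^sub>R y)) \<le> norm (s *\<^sub>R PY K x) + norm (t *\<^sub>R PY K y)"
    by (metis norm_triangle_ineq)
  also have "\<dots> = s * norm (PY K x) + t * norm (PY K y)" using st by simp
  also have "\<dots> < 1" using x y st by (intro convex_bound_lt) (auto simp: cyl_def ynorm_PY)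
  finally have 2: "ynorm K (s *\<^sub>R x + t *\<^sub>R y) < 1" by (simp add: ynorm_PY)
  show "s *\<^sub>R x + t *\<^sub>R y \<in> cyl K" using 1 2 by (simp add: cyl_def)
qed

lemma sqrt_sum_bound:
  fixes f :: "'a \<Rightarrow> real"
  assumes "finite A" "\<forall>i\<in>A. \<bar>f i\<bar> \<le> c" "card A \<le> N" "0 \<le> c"
  shows "sqrt (\<Sum>i\<in>A. (f i)^2) \<le> sqrt (real N * c^2)"
proof -
  have "(\<Sum>i\<in>A. (f i)^2) \<le> (\<Sum>i\<in>A. c^2)"
    using assms by (intro sum_mono) (simp add: abs_le_square_iff[symmetric])
  also have "\<dots> = real (card A) * c^2" by simp
  also have "\<dots> \<le> real N * c^2" using assms by (intro mult_right_mono) auto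
  finally show ?thesis by simp
qed

lemma leb_cbox_cart:
  fixes a b :: "real^'n::finite"
  assumes "\<forall>i. a$i \<le> b$i"
  shows "emeasure lebesgue (cbox a b) = ennreal (\<Prod>i\<in>UNIV. b$i - a$i)"
proof -
  have "a \<in> cbox a b" using assms by (simp add: mem_box_cart)
  then have ne: "cbox a b \<noteq> {}" by blast
  have "emeasure lebesgue (cbox a b) = emeasure lborel (cbox a b)"
    by simp
  also have "\<dots> = ennreal (measure lborel (cbox a b))"
    using emeasure_lborel_cbox_finite[of a b] by (intro emeasure_eq_ennreal_measure) auto
  also have "\<dots> = ennreal (\<Prod>i\<in>UNIV. b$i - a$i)" using content_cbox_cart[OF ne] by simp
  finally show ?thesis .
qed



lemma main_est:
  fixes K :: "'n::finite set" and u :: "real^'n \<Rightarrow> real" and q :: "real^'n"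
  assumes kpos: "0 < card K" and kN: "2 * card K < CARD('n)"
    and cvx: "convex_on (cyl K) u" and MA: "MA_ge_one (cyl K) u"
    and nonneg: "\<forall>p\<in>cyl K. u p \<ge> 0"
    and zero: "\<forall>p\<in>cyl K. (\<forall>i\<in>UNIV - K. p $ i = 0) \<longrightarrow> u p = 0"
    and r: "0 < r" "r < 1"
    and qX: "\<forall>i\<in>UNIV - K. q $ i = 0" and qy: "ynorm K q < 1"
  shows "r powr (2 - 2 * real (card K) / real CARD('n)) / (64 * real CARD('n))
     \<le> (SUP p\<in>{p. (\<forall>i\<in>K. p $ i = q $ i) \<and> xnorm K p = r}. u p)"
proof -
  define N where "N = CARD('n)"
  have Npos: "0 < N" by (simp add: N_def)
  define S where "S = {p. (\<forall>i\<in>K. p $ i = q $ i) \<and> xnorm K p = r}"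
  define h where "h = (SUP p\<in>S. u p)"
  have S_eq: "S = {p. PY K p = PY K q \<and> xnorm K p = r}"
    by (auto simp: S_def PY_def vec_eq_iff)
  have PXq: "PX K q = 0" using qX by (auto simp: PX_def vec_eq_iff)
  have xq: "xnorm K q = 0" by (simp add: xnorm_PX PXq)
  have q_cyl: "q \<in> cyl K" using xq qy by (simp add: cyl_def)
  have uq: "u q = 0" using zero q_cyl qX by blast
  have S_cyl: "S \<subseteq> cyl K"
  proof
    fix p assume p: "p \<in> S"
    have "ynorm K p = ynorm K q" using p by (simp add: S_def ynorm_def)
    then show "p \<in> cyl K" using p r qy by (simp add: S_def cyl_def)
  qed
  have closedS: "closed S" unfolding S_eq
    by (intro closed_Collect_conj closed_Collect_eq cont_PY cont_xnorm continuous_on_const)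
  have decomp: "\<And>p. p = PX K p + PY K p" by (simp add: PX_def PY_def vec_eq_iff)
  have "bounded S"
  proof (rule boundedI)
    fix p assume p: "p \<in> S"
    have "norm p \<le> norm (PX K p) + norm (PY K p)" using decomp[of p] by (metis norm_triangle_ineq)
    also have "\<dots> = r + norm (PY K q)" using p by (simp add: S_eq xnorm_PX)
    finally show "norm p \<le> r + norm (PY K q)" .
  qed
  then have "compact S" using closedS by (simp add: compact_eq_bounded_closed)
  moreover have "continuous_on S u"
    using convex_on_continuous[OF open_cyl cvx] S_cyl by (rule continuous_on_subset)
  ultimately have bdd: "bdd_above (u ` S)"
    by (intro bounded_imp_bdd_above compact_imp_bounded compact_continuous_image)
  have "K \<noteq> UNIV" using kN by auto
  then obtain j where j: "j \<notin> K" by blast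
  define s0 where "s0 = q + r *\<^sub>R axis j 1"
  have "PX K s0 = r *\<^sub>R axis j 1" using qX j by (auto simp: s0_def PX_def vec_eq_iff axis_def)
  then have "xnorm K s0 = r" using r by (simp add: xnorm_PX)
  moreover have "\<forall>i\<in>K. s0 $ i = q $ i" using j by (auto simp: s0_def axis_def)
  ultimately have s0S: "s0 \<in> S" by (simp add: S_def)
  have le_h: "\<And>p. p \<in> S \<Longrightarrow> u p \<le> h" unfolding h_def using bdd by (rule cSUP_upper2) auto
  have h0: "0 \<le> h" using le_h[OF s0S] nonneg S_cyl s0S by force
  have ballB: "u p \<le> h" if pY: "PY K p = PY K q" and px: "xnorm K p \<le> r" for p
  proof -
    define \<rho> where "\<rho> = xnorm K p"
    have dc: "\<And>i. p $ i = q $ i + PX K p $ i"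
    proof -
      fix i show "p $ i = q $ i + PX K p $ i"
      proof (cases "i \<in> K")
        case True then show ?thesis using pY by (auto simp: PY_def PX_def vec_eq_iff) (metis)
      next
        case False then show ?thesis using qX by (simp add: PX_def)
      qed
    qed
    show ?thesis
    proof (cases "\<rho> = 0")
      case True
      then have "PX K p = 0" by (simp add: \<rho>_def xnorm_PX)
      then have "p = q" using dc by (simp add: vec_eq_iff)
      then show ?thesis using uq h0 by simp
    next
      case False
      then have rho: "0 < \<rho>" "\<rho> \<le> r" using px by (auto simp: \<rho>_def xnorm_PX)
      define x where "x = PX K p"
      have nx: "norm x = \<rho>" by (simp add: x_def \<rho>_def xnorm_PX)
      define p1 where "p1 = q + (r / \<rho>) *\<^sub>R x"
      define p2 where "p2 = q - (r / \<rho>) *\<^sub>R x"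
      define t where "t = (1 - \<rho> / r) / 2"
      have xK: "\<And>i. i \<in> K \<Longrightarrow> x $ i = 0" by (simp add: x_def PX_def)
      have "PX K p1 = (r / \<rho>) *\<^sub>R x" using qX xK by (auto simp: p1_def PX_def vec_eq_iff)
      then have "xnorm K p1 = r" using rho r nx by (simp add: xnorm_PX)
      then have p1S: "p1 \<in> S" using xK by (simp add: S_def p1_def)
      have "PX K p2 = - ((r / \<rho>) *\<^sub>R x)" using qX xK by (auto simp: p2_def PX_def vec_eq_iff)
      then have "xnorm K p2 = r" using rho r nx by (simp add: xnorm_PX)
      then have p2S: "p2 \<in> S" using xK by (simp add: S_def p2_def)
      have t01: "0 \<le> t" "t \<le> 1" using rho r by (auto simp: t_def field_simps)
      have "p = (1 - t) *\<^sub>R p1 + t *\<^sub>R p2"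
      proof -
        have "\<And>i. (1 - t) * (q $ i + r / \<rho> * x $ i) + t * (q $ i - r / \<rho> * x $ i) = q $ i + x $ i"
          using rho r by (simp add: t_def field_simps)
        then show ?thesis using dc by (simp add: vec_eq_iff p1_def p2_def x_def)
      qed
      then have "u p \<le> (1 - t) * u p1 + t * u p2"
        using convex_onD[OF cvx t01 ] p1S p2S S_cyl by auto
      also have "\<dots> \<le> (1 - t) * h + t * h"
        using le_h[OF p1S] le_h[OF p2S] t01 by (intro add_mono mult_left_mono) auto
      finally show ?thesis by (simp add: algebra_simps)
    qed
  qed
  define a where "a = r / sqrt N"
  define b where "b = 1 / (2 * sqrt N)"
  have apos: "0 < a" and bpos: "0 < b" using r Npos by (auto simp: a_def b_def)
  have Na: "sqrt (real N * a^2) = r" using r Npos by (simp add: a_def power_divide)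
  have Nb: "sqrt (real N * b^2) = 1/2" using Npos by (simp add: b_def power_divide power_mult_distrib real_sqrt_divide)
  have cardX: "card (UNIV - K) \<le> N" by (simp add: N_def card_Diff_subset)
  have cardK: "card K \<le> N" by (simp add: N_def card_mono)
  define t where "t i = (if i \<in> K then b / 4 else a / 4)" for i
  define m where "m i = (if i \<in> K then q $ i / 2 else 0)" for i
  have tpos: "\<And>i. 0 < t i" using apos bpos by (simp add: t_def)
  have C: "p \<in> cyl K \<and> u p \<le> h" if inR: "\<forall>i. \<bar>p $ i - m i\<bar> \<le> 2 * t i" for p
  proof -
    define p1 where "p1 = (\<chi> i. if i \<in> K then q $ i else 2 * p $ i)"
    define p2 where "p2 = (\<chi> i. if i \<in> K then 2 * p $ i - q $ i else 0)"
    have bx: "\<forall>i\<in>UNIV - K. \<bar>p1 $ i\<bar> \<le> a"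
    proof
      fix i assume "i \<in> UNIV - K"
      then show "\<bar>p1 $ i\<bar> \<le> a" using inR[rule_format, of i] by (auto simp: p1_def m_def t_def)
    qed
    have "xnorm K p1 \<le> sqrt (real N * a^2)" unfolding xnorm_def
      by (rule sqrt_sum_bound) (use bx cardX apos in auto)
    then have x1: "xnorm K p1 \<le> r" using Na by simp
    have "PY K p1 = PY K q" by (simp add: PY_def p1_def vec_eq_iff)
    then have up1: "u p1 \<le> h" using ballB x1 by blast
    have "ynorm K p1 = ynorm K q" by (simp add: ynorm_def p1_def)
    then have p1c: "p1 \<in> cyl K" using x1 r qy by (simp add: cyl_def)
    have by2: "\<forall>i\<in>K. \<bar>p2 $ i\<bar> \<le> b"
    proof
      fix i assume "i \<in> K"
      then show "\<bar>p2 $ i\<bar> \<le> b" using inR[rule_format, of i] by (auto simp: p2_def m_def t_def abs_le_iff field_simps)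
    qed
    have "ynorm K p2 \<le> sqrt (real N * b^2)" unfolding ynorm_def
      by (rule sqrt_sum_bound) (use by2 cardK bpos in auto)
    then have y2: "ynorm K p2 < 1" using Nb by simp
    have x2: "xnorm K p2 = 0" by (simp add: xnorm_def p2_def)
    have p2c: "p2 \<in> cyl K" using x2 y2 by (simp add: cyl_def)
    have up2: "u p2 = 0" using zero p2c by (simp add: p2_def)
    have pe: "p = (1 - 1/2) *\<^sub>R p1 + (1/2) *\<^sub>R p2" by (simp add: vec_eq_iff p1_def p2_def field_simps)
    have pc: "p \<in> cyl K" unfolding pe
      using convexD[OF convex_cyl p1c p2c, of "1 - 1/2" "1/2"] by simp
    have "u p \<le> (1 - 1/2) * u p1 + (1/2) * u p2" unfolding pe
      by (rule convex_onD[OF cvx]) (use p1c p2c in auto)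
    also have "\<dots> \<le> h" using up1 up2 h0 by simp
    finally show ?thesis using pc by simp
  qed
  define lo where "lo = (\<chi> i. m i - t i)"
  define hi where "hi = (\<chi> i. m i + t i)"
  define E where "E = cbox lo hi"
  have memE: "\<And>p. p \<in> E \<Longrightarrow> \<bar>p $ i - m i\<bar> \<le> t i" for i
    by (auto simp: E_def mem_box_cart lo_def hi_def abs_le_iff) (metis diff_le_eq add.commute le_diff_eq)+
  have E_cyl: "E \<subseteq> cyl K"
  proof
    fix p assume "p \<in> E"
    then have "\<forall>i. \<bar>p $ i - m i\<bar> \<le> 2 * t i"
    proof (intro allI)
      fix i assume "p \<in> E"
      then have "\<bar>p $ i - m i\<bar> \<le> t i" by (rule memE)
      then show "\<bar>p $ i - m i\<bar> \<le> 2 * t i" using tpos[of i] by linarith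
    qed
    then show "p \<in> cyl K" using C by blast
  qed
  have E_borel: "E \<in> sets borel" by (simp add: E_def)
  define w where "w = (\<chi> i. h / t i)"
  have sub: "subdiff_image (cyl K) u E \<subseteq> cbox (- w) w"
  proof
    fix v assume "v \<in> subdiff_image (cyl K) u E"
    then obtain p where pE: "p \<in> E" and sg: "\<forall>q'\<in>cyl K. u q' \<ge> u p + v \<bullet> (q' - p)"
      by (auto simp: subdiff_image_def)
    have up0: "0 \<le> u p" using nonneg E_cyl pE by blast
    have key: "\<sigma> * v $ i \<le> h" if sig: "\<bar>\<sigma>\<bar> \<le> t i" for i \<sigma>
    proof -
      define q' where "q' = p + \<sigma> *\<^sub>R axis i 1"
      have "\<forall>j. \<bar>q' $ j - m j\<bar> \<le> 2 * t j"
      proof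
        fix j
        have "\<bar>q' $ j - m j\<bar> \<le> \<bar>p $ j - m j\<bar> + \<bar>(if j = i then \<sigma> else 0)\<bar>"
          by (simp add: q'_def axis_def abs_le_iff abs_if)
        also have "\<dots> \<le> t j + t j" using memE[OF pE, of j] sig tpos[of j] by auto
        finally show "\<bar>q' $ j - m j\<bar> \<le> 2 * t j" by simp
      qed
      then have "q' \<in> cyl K \<and> u q' \<le> h" using C by blast
      then have "u p + v \<bullet> (q' - p) \<le> h" using sg by fastforce
      moreover have "v \<bullet> (q' - p) = \<sigma> * v $ i" by (simp add: q'_def inner_axis)
      ultimately show ?thesis using up0 by simp
    qed
    show "v \<in> cbox (- w) w"
    proof (simp add: mem_box_cart, intro allI conjI)
      fix i
      have "t i * v $ i \<le> h" using key[of "t i" i] tpos[of i] by simp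
      then show "v $ i \<le> w $ i" using tpos[of i] by (simp add: w_def field_simps)
      have "(- t i) * v $ i \<le> h" using key[of "- t i" i] tpos[of i] by simp
      then show "- (w $ i) \<le> v $ i" using tpos[of i] by (simp add: w_def field_simps)
    qed
  qed
  have "emeasure lebesgue E \<le> emeasure lebesgue (subdiff_image (cyl K) u E)"
    using MA E_borel E_cyl unfolding MA_ge_one_def by blast
  also have "\<dots> \<le> emeasure lebesgue (cbox (- w) w)"
    by (rule emeasure_mono[OF sub]) simp
  finally have meas: "emeasure lebesgue E \<le> emeasure lebesgue (cbox (- w) w)" .
  have mE: "emeasure lebesgue E = ennreal (\<Prod>i\<in>UNIV. 2 * t i)"
    unfolding E_def using tpos by (subst leb_cbox_cart) (auto simp: lo_def hi_def less_eq_real_def)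
  have mW: "emeasure lebesgue (cbox (- w) w) = ennreal (\<Prod>i\<in>UNIV. 2 * (h / t i))"
    using tpos h0 by (subst leb_cbox_cart) (auto simp: w_def less_eq_real_def)
  have ineq: "(\<Prod>i\<in>UNIV. 2 * t i) \<le> (\<Prod>i\<in>UNIV. 2 * (h / t i))"
    using meas unfolding mE mW using tpos h0 by (subst (asm) ennreal_le_iff) (auto intro!: prod_nonneg divide_nonneg_pos)
  have tprod: "(\<Prod>i\<in>UNIV. (t i)^2) \<le> h ^ N"
  proof -
    have "(\<Prod>i\<in>UNIV. 2 * t i) * (\<Prod>i\<in>UNIV. t i) \<le> (\<Prod>i\<in>UNIV. 2 * (h / t i)) * (\<Prod>i\<in>UNIV. t i)"
      using ineq tpos by (intro mult_right_mono prod_nonneg) (auto simp: less_imp_le)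
    moreover have "(\<Prod>i\<in>UNIV. 2 * t i) * (\<Prod>i\<in>UNIV. t i) = 2^N * (\<Prod>i\<in>UNIV. (t i)^2)"
      by (simp add: prod.distrib power2_eq_square N_def mult.assoc)
    moreover have "(\<Prod>i\<in>UNIV. 2 * (h / t i)) * (\<Prod>i\<in>UNIV. t i) = 2^N * h^N"
    proof -
      have "(\<Prod>i\<in>UNIV. 2 * (h / t i)) * (\<Prod>i\<in>UNIV. t i) = (\<Prod>i\<in>UNIV. 2 * (h / t i) * t i)"
        by (rule prod.distrib[symmetric])
      also have "\<dots> = (\<Prod>i\<in>(UNIV::'n set). 2 * h)"
        proof (rule prod.cong[OF refl]) fix i show "2 * (h / t i) * t i = 2 * h" using tpos[of i] by simp qed
      also have "\<dots> = 2^N * h^N" by (simp add: N_def power_mult_distrib)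
      finally show ?thesis .
    qed
    ultimately show ?thesis by simp
  qed
  define k where "k = card K"
  have kle: "k \<le> N" using cardK by (simp add: k_def)
  have cardC: "card (- K) = N - k" by (simp add: Compl_eq_Diff_UNIV card_Diff_subset N_def k_def)
  have tsq: "(\<Prod>i\<in>UNIV. (t i)^2) = ((b/4)^2)^k * ((a/4)^2)^(N-k)"
  proof -
    have "(\<Prod>i\<in>UNIV. (t i)^2) = (\<Prod>i\<in>UNIV. if i \<in> K then (b/4)^2 else (a/4)^2)"
      by (rule prod.cong) (auto simp: t_def)
    also have "\<dots> = ((b/4)^2)^k * ((a/4)^2)^(N-k)"
      by (simp add: prod.If_cases cardC k_def)
    finally show ?thesis .
  qed
  define M where "M = 64 * real N"
  have Mpos: "0 < M" using Npos by (simp add: M_def)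
  have b2: "(b/4)^2 = 1 / M" using Npos by (simp add: M_def b_def power_divide power_mult_distrib)
  have a2: "(a/4)^2 = r^2 / (16 * real N)" using Npos r by (simp add: a_def power_divide power_mult_distrib)
  have "(r^2 / M)^(N-k) \<le> ((a/4)^2)^(N-k)"
    unfolding a2 M_def using Npos by (intro power_mono divide_left_mono) auto
  then have "(1 / M)^k * (r^2 / M)^(N-k) \<le> ((b/4)^2)^k * ((a/4)^2)^(N-k)"
    unfolding b2 using Mpos by (intro mult_left_mono) auto
  moreover have "(1 / M)^k * (r^2 / M)^(N-k) = (r^2)^(N-k) / M^N"
  proof -
    have e: "M^N = M^k * M^(N-k)" unfolding power_add[symmetric] using kle by simp
    show ?thesis unfolding e by (simp add: power_divide)
  qed
  ultimately have hN: "(r^2)^(N-k) / M^N \<le> h ^ N" using tprod tsq by simp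
  define \<alpha> where "\<alpha> = 2 - 2 * real k / real N"
  have "(r powr \<alpha>)^N = r powr (real N * \<alpha>)" using r by (simp add: powr_power)
  also have "real N * \<alpha> = real (2 * (N - k))" using kle Npos by (simp add: \<alpha>_def of_nat_diff field_simps)
  also have "r powr real (2 * (N - k)) = (r^2)^(N-k)" using powr_realpow[OF r(1), of "2 * (N - k)"] by (simp add: power_mult)
  finally have pw: "(r powr \<alpha> / M)^N \<le> h ^ N" using hN by (simp add: power_divide)
  have eN: "Suc (N - 1) = N" using Npos by simp
  have fin: "r powr \<alpha> / M \<le> h"
    using power_le_imp_le_base[of "r powr \<alpha> / M" "N - 1" h] pw h0 unfolding eN by blast
  show ?thesis using fin unfolding \<alpha>_def k_def M_def N_def h_def S_def .
qed

theorem lemma3p2: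
  assumes "CARD('n::finite) \<ge> 3"
  shows "\<exists>c>0. \<forall>K::'n set. \<forall>u::real^'n \<Rightarrow> real. \<forall>r::real.
     0 < card K \<and> 2 * card K < CARD('n) \<and>
     convex_on (cyl K) u \<and> MA_ge_one (cyl K) u \<and>
     (\<forall>p\<in>cyl K. u p \<ge> 0) \<and>
     (\<forall>p\<in>cyl K. (\<forall>i\<in>UNIV - K. p $ i = 0) \<longrightarrow> u p = 0) \<and>
     0 < r \<and> r < 1
     \<longrightarrow> (INF q\<in>{q. (\<forall>i\<in>UNIV - K. q $ i = 0) \<and> ynorm K q < 1}.
            SUP p\<in>{p. (\<forall>i\<in>K. p $ i = q $ i) \<and> xnorm K p = r}. u p)
         > c * r powr (2 - 2 * real (card K) / real CARD('n))"
proof (intro exI[of _ "1 / (128 * real CARD('n))"] conjI allI impI)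
  show "0 < 1 / (128 * real CARD('n))" by simp
  fix K :: "'n set" and u :: "real^'n \<Rightarrow> real" and r :: real
  assume H: "0 < card K \<and> 2 * card K < CARD('n) \<and>
     convex_on (cyl K) u \<and> MA_ge_one (cyl K) u \<and>
     (\<forall>p\<in>cyl K. u p \<ge> 0) \<and>
     (\<forall>p\<in>cyl K. (\<forall>i\<in>UNIV - K. p $ i = 0) \<longrightarrow> u p = 0) \<and>
     0 < r \<and> r < 1"
  define \<alpha> where "\<alpha> = 2 - 2 * real (card K) / real CARD('n)"
  define I where "I = {q::real^'n. (\<forall>i\<in>UNIV - K. q $ i = 0) \<and> ynorm K q < 1}"
  have "0 \<in> I" by (simp add: I_def ynorm_def)
  then have Ine: "I \<noteq> {}" by blast
  have "r powr \<alpha> / (64 * real CARD('n)) \<le> (INF q\<in>I. SUP p\<in>{p. (\<forall>i\<in>K. p $ i = q $ i) \<and> xnorm K p = r}. u p)"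
  proof (rule cINF_greatest[OF Ine])
    fix q assume "q \<in> I"
    then show "r powr \<alpha> / (64 * real CARD('n)) \<le> (SUP p\<in>{p. (\<forall>i\<in>K. p $ i = q $ i) \<and> xnorm K p = r}. u p)"
      unfolding \<alpha>_def using H by (intro main_est) (auto simp: I_def)
  qed
  moreover have "1 / (128 * real CARD('n)) * r powr \<alpha> < r powr \<alpha> / (64 * real CARD('n))"
    using H by (simp add: field_simps)
  ultimately show "(INF q\<in>{q. (\<forall>i\<in>UNIV - K. q $ i = 0) \<and> ynorm K q < 1}.
            SUP p\<in>{p. (\<forall>i\<in>K. p $ i = q $ i) \<and> xnorm K p = r}. u p)
         > 1 / (128 * real CARD('n)) * r powr (2 - 2 * real (card K) / real CARD('n))"
    unfolding \<alpha>_def I_def by linarith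
qed

end
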